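(* Let $\mathbb{X}$ be a real Banach space such that $\operatorname{Sm}\mathbb{X}$ is a dense $G_\delta$ subset of $\mathbb{X}$, and let $U\subseteq\mathbb{X}$ be dense in $\mathbb{X}$. If a bounded linear operator $T:\mathbb{X}\to\mathbb{X}$ preserves Birkhoff–James orthogonality at each point of $U$, then $T$ is a scalar multiple of an isometry (there is $\lambda\ge0$ with $\|Tx\|=\lambda\|x\|$ for all $x$).
   Context: $u\perp_B v$ means $\|u+\lambda v\|\ge\|u\|$ for all real $\lambda$. $T$ preserves Birkhoff–James orthogonality at $x$ if $x\perp_B v$ implies $Tx\perp_B Tv$ for all $v$. For non-zero $z$, $J(z)=\{f\in\mathbb{X}^*:\|f\|=1,\ f(z)=\|z\|\}$; $z$ is smooth if $J(z)$ is a singleton; $\operatorname{Sm}\mathbb{X}$ is the set of smooth points. *)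

theory Defs
  imports "HOL-Analysis.Analysis"
begin

definition bj_orth :: "'a::real_normed_vector \<Rightarrow> 'a \<Rightarrow> bool" where
  "bj_orth u v \<longleftrightarrow> (\<forall>t::real. norm (u + t *\<^sub>R v) \<ge> norm u)"

definition preserves_bj_at :: "('a::real_normed_vector \<Rightarrow> 'b::real_normed_vector) \<Rightarrow> 'a \<Rightarrow> bool" where
  "preserves_bj_at T x \<longleftrightarrow> (\<forall>v. bj_orth x v \<longrightarrow> bj_orth (T x) (T v))"

definition supp_funcs :: "'a::real_normed_vector \<Rightarrow> ('a \<Rightarrow>\<^sub>L real) set" where
  "supp_funcs z = {f. norm f = 1 \<and> blinfun_apply f z = norm z}"

definition smooth_point :: "'a::real_normed_vector \<Rightarrow> bool" where
  "smooth_point z \<longleftrightarrow> z \<noteq> 0 \<and> (\<exists>f. supp_funcs z = {f})"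

definition smooth_points :: "'a::real_normed_vector set" where
  "smooth_points = {z. smooth_point z}"

end

theory Submission
  imports Defs
begin

lemma pi_exists:
  fixes v :: "'a::real_normed_vector"
  assumes "v \<notin> span S"
  shows "\<exists>p. linear p \<and> (\<forall>x\<in>span S. p x = 0) \<and> p v = (1::real)"
proof -
  obtain B where B: "B \<subseteq> span S" "independent B" "span S \<subseteq> span B"
    using basis_exists[of "span S"] by metis
  have sB: "span B = span S"
    using B by (metis span_minimal subspace_span subset_antisym span_span)
  have vB: "v \<notin> span B" using assms sB by simp
  have ind: "independent (insert v B)" using independent_insertI[OF vB B(2)] .
  obtain p where p: "linear p" "\<forall>x\<in>insert v B. p x = (if x = v then 1 else (0::real))"
    using linear_independent_extend[OF ind, of "\<lambda>x. if x = v then (1::real) else 0"] by blast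
  have "\<forall>x\<in>span B. p x = 0"
    using linear_eq_0_on_span[OF p(1)] p(2) vB span_base by (metis insertCI)
  then show ?thesis using p sB by auto
qed

lemma ext1:
  fixes f :: "'a::real_normed_vector \<Rightarrow> real"
  assumes f: "linear f" and fb: "\<forall>x\<in>span S. f x \<le> norm x" and v: "v \<notin> span S"
  shows "\<exists>g. linear g \<and> (\<forall>x\<in>span S. g x = f x) \<and> (\<forall>x\<in>span (insert v S). g x \<le> norm x)"
proof -
  obtain p where p: "linear p" "\<forall>x\<in>span S. p x = 0" "p v = (1::real)"
    using pi_exists[OF v] by blast
  define A where "A = (\<lambda>u. f u - norm (u - v)) ` span S"
  define d where "d = Sup A"
  have key: "f u - norm (u - v) \<le> norm (m + v) - f m" if "u \<in> span S" "m \<in> span S" for u m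
  proof -
    have "f u + f m = f (u + m)" using linear_add[OF f] by simp
    also have "\<dots> \<le> norm (u + m)" using fb that by (simp add: span_add)
    also have "\<dots> \<le> norm (u - v) + norm (m + v)"
      using norm_triangle_ineq[of "u - v" "m + v"] by simp
    finally show ?thesis by simp
  qed
  have Ane: "A \<noteq> {}" unfolding A_def using span_zero by blast
  have Abdd: "bdd_above A" unfolding A_def
    using key[OF _ span_zero] linear_0[OF f] by (auto intro!: bdd_aboveI2)
  have dup: "f u - norm (u - v) \<le> d" if "u \<in> span S" for u
    unfolding d_def A_def using that Abdd unfolding A_def by (auto intro!: cSup_upper)
  have dlo: "d \<le> norm (m + v) - f m" if "m \<in> span S" for m
    unfolding d_def using Ane key that unfolding A_def by (auto intro!: cSup_least)
  define g where "g = (\<lambda>x. f x + (d - f v) * p x)"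
  have lg: "linear g"
    unfolding g_def linear_iff
    by (simp add: linear_add[OF f] linear_add[OF p(1)] linear_scale[OF f] linear_scale[OF p(1)] algebra_simps)
  have gS: "\<forall>x\<in>span S. g x = f x" using p(2) by (simp add: g_def)
  have "g x \<le> norm x" if x: "x \<in> span (insert v S)" for x
  proof -
    obtain k where m: "x - k *\<^sub>R v \<in> span S" using x span_breakdown_eq by blast
    define m where "m = x - k *\<^sub>R v"
    have mS: "m \<in> span S" using m m_def by simp
    have xm: "x = m + k *\<^sub>R v" by (simp add: m_def)
    have gx: "g x = f m + k * d"
      unfolding g_def xm using p(2) mS p(3)
      by (simp add: linear_add[OF f] linear_add[OF p(1)] linear_scale[OF f] linear_scale[OF p(1)] algebra_simps)
    consider "k = 0" | "k > 0" | "k < 0" by linarith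
    then show ?thesis
    proof cases
      case 1 then show ?thesis using gx fb mS xm by simp
    next
      case 2
      have mk: "(1/k) *\<^sub>R m \<in> span S" using mS by (simp add: span_scale)
      have "d \<le> norm ((1/k) *\<^sub>R m + v) - f ((1/k) *\<^sub>R m)" using dlo[OF mk] .
      hence "k * d \<le> k * (norm ((1/k) *\<^sub>R m + v) - f ((1/k) *\<^sub>R m))"
        using 2 by (intro mult_left_mono) auto
      hence "k * d \<le> k * norm ((1/k) *\<^sub>R m + v) - k * f ((1/k) *\<^sub>R m)"
        by (simp add: right_diff_distrib)
      also have "k * norm ((1/k) *\<^sub>R m + v) = norm (k *\<^sub>R ((1/k) *\<^sub>R m + v))"
        using 2 by simp
      also have "k *\<^sub>R ((1/k) *\<^sub>R m + v) = x" using 2 xm by (simp add: algebra_simps)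
      also have "k * f ((1/k) *\<^sub>R m) = f m" using 2 linear_scale[OF f] by simp
      finally show ?thesis using gx by simp
    next
      case 3
      define j where "j = - k"
      have j: "j > 0" using 3 j_def by simp
      have mk: "(1/j) *\<^sub>R m \<in> span S" using mS by (simp add: span_scale)
      have "f ((1/j) *\<^sub>R m) - norm ((1/j) *\<^sub>R m - v) \<le> d" using dup[OF mk] .
      hence "j * (f ((1/j) *\<^sub>R m) - norm ((1/j) *\<^sub>R m - v)) \<le> j * d"
        using j by (intro mult_left_mono) auto
      hence "j * f ((1/j) *\<^sub>R m) - j * norm ((1/j) *\<^sub>R m - v) \<le> j * d"
        by (simp add: right_diff_distrib)
      also have "j * norm ((1/j) *\<^sub>R m - v) = norm (j *\<^sub>R ((1/j) *\<^sub>R m - v))"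
        using j by simp
      also have "j *\<^sub>R ((1/j) *\<^sub>R m - v) = x" using j xm j_def by (simp add: algebra_simps)
      also have "j * f ((1/j) *\<^sub>R m) = f m" using j linear_scale[OF f] by simp
      finally show ?thesis using gx j_def by simp
    qed
  qed
  then show ?thesis using lg gS by blast
qed

lemma hb_fin:
  fixes f :: "'a::real_normed_vector \<Rightarrow> real"
  assumes "finite F" "linear f" "\<forall>x\<in>span S. f x \<le> norm x"
  shows "\<exists>g. linear g \<and> (\<forall>x\<in>span S. g x = f x) \<and> (\<forall>x\<in>span (F \<union> S). g x \<le> norm x)"
  using assms(1)
proof (induction F rule: finite_induct)
  case empty then show ?case using assms by auto
next
  case (insert v F)
  then obtain g where g: "linear g" "\<forall>x\<in>span S. g x = f x" "\<forall>x\<in>span (F \<union> S). g x \<le> norm x"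
    by blast
  show ?case
  proof (cases "v \<in> span (F \<union> S)")
    case True
    have "span (insert v F \<union> S) = span (F \<union> S)"
      using True span_redundant[of v "F \<union> S"] by simp
    then show ?thesis using g by auto
  next
    case False
    obtain h where h: "linear h" "\<forall>x\<in>span (F \<union> S). h x = g x"
        "\<forall>x\<in>span (insert v (F \<union> S)). h x \<le> norm x"
      using ext1[OF g(1) g(3) False] by blast
    have "span S \<subseteq> span (F \<union> S)" by (rule span_mono) auto
    then show ?thesis using h g by (intro exI[of _ h]) auto
  qed
qed

lemma hb_point:
  fixes z :: "'a::real_normed_vector"
  assumes z: "z \<noteq> 0" and F: "finite F"
  shows "\<exists>f. linear f \<and> f z = norm z \<and> (\<forall>x\<in>span (insert z F). \<bar>f x\<bar> \<le> norm x)"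
proof -
  have "z \<notin> span {}" using z by simp
  then obtain p where p: "linear p" "p z = (1::real)" using pi_exists by blast
  define f0 where "f0 = (\<lambda>x. norm z * p x)"
  have lf0: "linear f0" unfolding f0_def linear_iff
    by (simp add: linear_add[OF p(1)] linear_scale[OF p(1)] algebra_simps)
  have b0: "\<forall>x\<in>span {z}. f0 x \<le> norm x"
  proof
    fix x assume "x \<in> span {z}"
    then obtain c where "x = c *\<^sub>R z" using span_breakdown_eq[of x z "{}"] by auto
    then show "f0 x \<le> norm x" using p unfolding f0_def
      by (simp add: linear_scale[OF p(1)] mult.commute[of "norm z"] mult_right_mono)
  qed
  obtain g where g: "linear g" "\<forall>x\<in>span {z}. g x = f0 x" "\<forall>x\<in>span (F \<union> {z}). g x \<le> norm x"
    using hb_fin[OF F lf0 b0] by blast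
  have gz: "g z = norm z" using g(2) p(2) span_base[of z "{z}"] by (simp add: f0_def)
  have "\<bar>g x\<bar> \<le> norm x" if "x \<in> span (insert z F)" for x
  proof -
    have "-x \<in> span (F \<union> {z})" "x \<in> span (F \<union> {z})" using that span_neg by auto
    then have "g x \<le> norm x" "g (-x) \<le> norm x" using g(3) by auto
    then show ?thesis using linear_neg[OF g(1)] by (simp add: abs_le_iff)
  qed
  then show ?thesis using g(1) gz by blast
qed

lemma step_ineq:
  fixes a aa p pp h sg sg2 e B m :: real
  assumes m: "m>0" "m \<le> a" "m \<le> aa" and p: "0 \<le> p" "p \<le> B*a" and e: "e \<ge> 0"
    and h1: "a + h* sg - e \<le> aa" and h2: "aa - h* sg2 - e \<le> a" and h3: "p*(a + h* sg) - e \<le> a*pp"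
  shows "p/a - B*(h*(sg2-sg) + 2*e)/m - e/m^2 \<le> pp/aa"
proof -
  define r where "r = p/a"
  define d where "d = aa - a - h* sg"
  have apos: "a > 0" "aa > 0" using m by auto
  have r0: "0 \<le> r" "r \<le> B" using p apos by (auto simp: r_def field_simps)
  have d1: "d + e \<ge> 0" using h1 by (simp add: d_def)
  have d2: "d + e \<le> h*(sg2-sg) + 2*e" using h2 by (simp add: d_def algebra_simps)
  have "pp \<ge> (p*(a + h* sg) - e)/a" using h3 apos by (simp add: field_simps)
  also have "(p*(a + h* sg) - e)/a = r*(aa - d) - e/a"
    using apos by (simp add: r_def d_def field_simps)
  finally have q1: "pp \<ge> r*(aa - d) - e/a" .
  hence "pp/aa \<ge> (r*(aa - d) - e/a)/aa" using apos by (simp add: divide_right_mono)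
  also have "(r*(aa - d) - e/a)/aa = r - r*d/aa - e/(a*aa)"
    using apos by (simp add: field_simps)
  finally have q2: "pp/aa \<ge> r - r*d/aa - e/(a*aa)" .
  have "r*d \<le> r*(d+e)" using r0 e by (simp add: mult_left_mono algebra_simps)
  also have "\<dots> \<le> B*(d+e)" using r0 d1 by (simp add: mult_right_mono)
  finally have "r*d/aa \<le> B*(d+e)/aa" using apos by (simp add: divide_right_mono)
  also have "B*(d+e)/aa \<le> B*(d+e)/m"
    using r0 d1 m apos by (intro divide_left_mono) (auto intro: mult_nonneg_nonneg)
  also have "B*(d+e)/m \<le> B*(h*(sg2-sg) + 2*e)/m"
    using r0 d2 m by (intro divide_right_mono mult_left_mono) auto
  finally have q3: "r*d/aa \<le> B*(h*(sg2-sg) + 2*e)/m" .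
  have "m^2 \<le> a*aa" using m by (simp add: power2_eq_square mult_mono)
  hence q4: "e/(a*aa) \<le> e/m^2" using e m by (intro divide_left_mono) auto
  show ?thesis using q2 q3 q4 by (simp add: r_def)
qed

lemma chain1d:
  fixes \<phi> \<psi> :: "real \<Rightarrow> real"
  assumes m: "m > 0" and phm: "\<forall>t\<in>{0..1}. m \<le> \<phi> t"
    and psi: "\<forall>t\<in>{0..1}. 0 \<le> \<psi> t \<and> \<psi> t \<le> B * \<phi> t" and L: "L \<ge> 0"
    and H: "\<forall>t\<in>{0..1}. \<forall>e>0. \<exists>s. \<bar>s\<bar> \<le> L \<and> (\<forall>u\<in>{0..1}.
              \<phi> t + (u - t) * s - e \<le> \<phi> u \<and> \<psi> t * (\<phi> t + (u - t) * s) - e \<le> \<phi> t * \<psi> u)"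
  shows "\<psi> 0 / \<phi> 0 \<le> \<psi> 1 / \<phi> 1"
proof -
  define C where "C = B*(2*L+2)/m + 1/m^2"
  have main: "\<psi> 0 / \<phi> 0 - C / real N \<le> \<psi> 1 / \<phi> 1" if N: "N \<ge> 1" for N :: nat
  proof -
    define h where "h = 1 / real N"
    define e where "e = h^2"
    define t where "t = (\<lambda>k::nat. real k * h)"
    have hpos: "h > 0" using N by (simp add: h_def)
    have epos: "e > 0" using hpos by (simp add: e_def)
    have tin: "t k \<in> {0..1}" if "k \<le> N" for k
      using that N by (auto simp: t_def h_def field_simps)
    have tsuc: "t (Suc k) - t k = h" for k by (simp add: t_def algebra_simps)
    define P where "P = (\<lambda>k s. \<bar>s\<bar> \<le> L \<and> (\<forall>u\<in>{0..1}.
              \<phi> (t k) + (u - t k) * s - e \<le> \<phi> u \<and> \<psi> (t k) * (\<phi> (t k) + (u - t k) * s) - e \<le> \<phi> (t k) * \<psi> u))"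
    define sig where "sig = (\<lambda>k. SOME s. P k s)"
    have Psig: "P k (sig k)" if "k \<le> N" for k
    proof -
      have "\<exists>s. P k s" using H tin[OF that] epos unfolding P_def by blast
      then show ?thesis unfolding sig_def by (rule someI_ex)
    qed
    define rho where "rho = (\<lambda>k. \<psi> (t k) / \<phi> (t k))"
    have ind: "k \<le> N \<longrightarrow> rho 0 - B*(h*(sig k - sig 0) + 2*real k*e)/m - real k*e/m^2 \<le> rho k" for k
    proof (induction k)
      case 0 then show ?case by simp
    next
      case (Suc k)
      show ?case
      proof
        assume k: "Suc k \<le> N"
        then have IH: "rho 0 - B*(h*(sig k - sig 0) + 2*real k*e)/m - real k*e/m^2 \<le> rho k"
          using Suc by simp
        have tk: "t k \<in> {0..1}" "t (Suc k) \<in> {0..1}" using tin k by auto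
        have P1: "P k (sig k)" "P (Suc k) (sig (Suc k))" using Psig k by auto
        have a1: "\<phi> (t k) + h * sig k - e \<le> \<phi> (t (Suc k))"
          using P1(1) tk(2) tsuc[of k] unfolding P_def by auto
        have a3: "\<psi> (t k) * (\<phi> (t k) + h * sig k) - e \<le> \<phi> (t k) * \<psi> (t (Suc k))"
          using P1(1) tk(2) tsuc[of k] unfolding P_def by auto
        have "t k - t (Suc k) = - h" using tsuc[of k] by simp
        moreover have "\<phi> (t (Suc k)) + (t k - t (Suc k)) * sig (Suc k) - e \<le> \<phi> (t k)"
          using P1(2) tk(1) unfolding P_def by blast
        ultimately have a2: "\<phi> (t (Suc k)) - h * sig (Suc k) - e \<le> \<phi> (t k)"
          by simp
        have st: "rho k - B*(h*(sig (Suc k) - sig k) + 2*e)/m - e/m^2 \<le> rho (Suc k)"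
          unfolding rho_def
          by (rule step_ineq[OF m _ _ _ _ _ a1 a2 a3]) (use phm psi tk epos in auto)
        have "B*(h*(sig (Suc k) - sig 0) + 2*real (Suc k)*e)/m
            = B*(h*(sig k - sig 0) + 2*real k*e)/m + B*(h*(sig (Suc k) - sig k) + 2*e)/m"
          by (simp add: add_divide_distrib[symmetric] algebra_simps)
        moreover have "real (Suc k)*e/m^2 = real k*e/m^2 + e/m^2" by (simp add: add_divide_distrib[symmetric] algebra_simps)
        ultimately show "rho 0 - B*(h*(sig (Suc k) - sig 0) + 2*real (Suc k)*e)/m - real (Suc k)*e/m^2 \<le> rho (Suc k)"
          using IH st by linarith
      qed
    qed
    have fin: "rho 0 - B*(h*(sig N - sig 0) + 2*real N*e)/m - real N*e/m^2 \<le> rho N"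
      using ind[of N] by simp
    have B0: "B \<ge> 0"
    proof -
      have z01: "(0::real) \<in> {0..1}" by simp
      have "0 \<le> B * \<phi> 0" using psi z01 by (meson order_trans)
      moreover have "\<phi> 0 > 0" using phm m z01 by (meson less_le_trans)
      ultimately show ?thesis by (simp add: zero_le_mult_iff)
    qed
    have sb: "sig N - sig 0 \<le> 2*L" using Psig[of N] Psig[of 0] unfolding P_def by auto
    have Ne: "real N * e = h" using N by (simp add: e_def h_def power2_eq_square)
    have "B*(h*(sig N - sig 0) + 2*real N*e)/m \<le> B*(h*(2*L) + 2*h)/m"
      using sb hpos B0 m Ne by (intro divide_right_mono mult_left_mono) (auto simp: mult_left_mono)
    also have "B*(h*(2*L) + 2*h)/m + h/m^2 = C / real N"
      using m N by (simp add: C_def h_def field_simps)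
    finally have "rho 0 - C / real N \<le> rho N" using fin Ne by (simp add: algebra_simps)
    moreover have "t 0 = 0" "t N = 1" using N by (auto simp: t_def h_def)
    ultimately show ?thesis by (simp add: rho_def)
  qed
  show ?thesis
  proof (rule ccontr)
    assume "\<not> ?thesis"
    then have g: "\<psi> 0 / \<phi> 0 - \<psi> 1 / \<phi> 1 > 0" by simp
    obtain N :: nat where N0: "max 1 (C / (\<psi> 0 / \<phi> 0 - \<psi> 1 / \<phi> 1)) < real N"
      using reals_Archimedean2 by blast
    have N: "real N > C / (\<psi> 0 / \<phi> 0 - \<psi> 1 / \<phi> 1)" "N \<ge> 1" using N0 by auto
    have "C / real N < \<psi> 0 / \<phi> 0 - \<psi> 1 / \<phi> 1"
      using N g by (simp add: divide_less_eq mult.commute pos_divide_less_eq)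
    then show False using main[OF N(2)] by linarith
  qed
qed

lemma Klem:
  fixes T :: "'a::real_normed_vector \<Rightarrow> 'a"
  assumes T: "bounded_linear T" and pz: "preserves_bj_at T z" and z: "z \<noteq> 0"
    and f: "linear f" and fz: "f z = norm z" and fb: "\<forall>x\<in>span (insert z F). \<bar>f x\<bar> \<le> norm x"
    and w: "w \<in> span (insert z F)"
  shows "f w * norm (T z) \<le> norm z * norm (T w)"
proof -
  interpret T: bounded_linear T by fact
  define E where "E = span (insert z F)"
  have zE: "z \<in> E" unfolding E_def by (simp add: span_base)
  define al where "al = f w / norm z"
  define h where "h = w - al *\<^sub>R z"
  have hE: "h \<in> E" using w zE unfolding h_def E_def by (simp add: span_diff span_scale)
  have fh: "f h = 0" unfolding h_def al_def using z fz
    by (simp add: linear_diff[OF f] linear_scale[OF f])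
  have "bj_orth z h" unfolding bj_orth_def
  proof
    fix t :: real
    have "z + t *\<^sub>R h \<in> E" using zE hE unfolding E_def by (simp add: span_add span_scale)
    hence "\<bar>f (z + t *\<^sub>R h)\<bar> \<le> norm (z + t *\<^sub>R h)" using fb unfolding E_def by blast
    moreover have "f (z + t *\<^sub>R h) = norm z" using fz fh by (simp add: linear_add[OF f] linear_scale[OF f])
    ultimately show "norm z \<le> norm (z + t *\<^sub>R h)" by simp
  qed
  hence orth: "bj_orth (T z) (T h)" using pz unfolding preserves_bj_at_def by blast
  have Tw: "T w = al *\<^sub>R T z + T h" unfolding h_def by (simp add: T.diff T.scaleR)
  have "\<bar>al\<bar> * norm (T z) \<le> norm (T w)"
  proof (cases "al = 0")
    case True then show ?thesis by simp
  next
    case False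
    have "T w = al *\<^sub>R (T z + (1/al) *\<^sub>R T h)" using False Tw by (simp add: algebra_simps)
    hence "norm (T w) = \<bar>al\<bar> * norm (T z + (1/al) *\<^sub>R T h)" by simp
    moreover have "norm (T z) \<le> norm (T z + (1/al) *\<^sub>R T h)" using orth unfolding bj_orth_def by blast
    ultimately show ?thesis by (simp add: mult_left_mono)
  qed
  hence "norm z * (\<bar>al\<bar> * norm (T z)) \<le> norm z * norm (T w)" by (simp add: mult_left_mono)
  moreover have "norm z * \<bar>al\<bar> = \<bar>f w\<bar>" using z by (simp add: al_def)
  ultimately have "\<bar>f w\<bar> * norm (T z) \<le> norm z * norm (T w)" by (simp add: mult.assoc[symmetric])
  moreover have "f w * norm (T z) \<le> \<bar>f w\<bar> * norm (T z)" by (simp add: mult_right_mono)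
  ultimately show ?thesis by linarith
qed

lemma Hvec:
  fixes T :: "'a::real_normed_vector \<Rightarrow> 'a"
  assumes T: "bounded_linear T" and dense: "closure U = UNIV" and pres: "\<forall>x\<in>U. preserves_bj_at T x"
    and K: "K > 0" "\<forall>x. norm (T x) \<le> norm x * K"
    and m: "m > 0" "\<forall>t\<in>{0..1}. m \<le> norm (a + t *\<^sub>R (b - a))"
    and M: "M = norm a + norm (b - a)"
    and t: "t \<in> {0..1}" and ep: "ep > 0"
  shows "\<exists>s. \<bar>s\<bar> \<le> norm (b - a) \<and> (\<forall>u\<in>{0..1}.
      norm (a + t *\<^sub>R (b - a)) + (u - t) * s - ep \<le> norm (a + u *\<^sub>R (b - a)) \<and>
      norm (T (a + t *\<^sub>R (b - a))) * (norm (a + t *\<^sub>R (b - a)) + (u - t) * s) - ep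
        \<le> norm (a + t *\<^sub>R (b - a)) * norm (T (a + u *\<^sub>R (b - a))))"
proof -
  interpret T: bounded_linear T by fact
  define y where "y = b - a"
  define p where "p = (\<lambda>u. a + u *\<^sub>R y)"
  define L where "L = norm y"
  have M0: "M \<ge> 0" using M by simp
  have LM: "L \<le> M" using M by (simp add: L_def y_def)
  define de where "de = min 1 (min (m/2) (ep / (2 + K*(5*M+2))))"
  have den: "2 + K*(5*M+2) > 0" using K M0 by (simp add: add_pos_nonneg)
  have de0: "de > 0" using m ep den by (simp add: de_def)
  have de1: "de \<le> 1" "de \<le> m/2" "de \<le> ep / (2 + K*(5*M+2))" unfolding de_def by linarith+
  have "p t \<in> closure U" using dense by simp
  then obtain z where zU: "z \<in> U" and dz: "dist z (p t) < de"
    using closure_approachable de0 by blast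
  have dz': "norm (z - p t) < de" using dz by (simp add: dist_norm)
  have pt_m: "m \<le> norm (p t)" using m(2) t by (simp add: p_def y_def)
  have z0: "z \<noteq> 0"
  proof
    assume "z = 0" then have "norm (p t) < de" using dz' by simp
    then show False using pt_m de1 m by linarith
  qed
  obtain f where f: "linear f" "f z = norm z" "\<forall>x\<in>span (insert z {a, b}). \<bar>f x\<bar> \<le> norm x"
    using hb_point[OF z0, of "{a, b}"] by auto
  define E where "E = span (insert z {a, b})"
  have aE: "a \<in> E" and bE: "b \<in> E" and zE: "z \<in> E" unfolding E_def by (auto intro: span_base)
  have yE: "y \<in> E" unfolding y_def E_def using aE bE unfolding E_def by (simp add: span_diff)
  have pE: "p u \<in> E" for u unfolding p_def E_def using aE yE unfolding E_def by (simp add: span_add span_scale)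
  have fb: "\<bar>f x\<bar> \<le> norm x" if "x \<in> E" for x using f(3) that unfolding E_def by blast
  define s where "s = f y"
  have sL: "\<bar>s\<bar> \<le> L" unfolding s_def L_def using fb[OF yE] .
  have fp: "f (p u) = f (p t) + (u - t) * s" for u
  proof -
    have "p u = p t + (u - t) *\<^sub>R y" by (simp add: p_def algebra_simps)
    then show ?thesis by (simp add: s_def linear_add[OF f(1)] linear_scale[OF f(1)])
  qed
  have fpt_up: "f (p t) \<le> norm (p t)" using fb[OF pE[of t]] by simp
  have fpt_lo: "norm (p t) - 2*de \<le> f (p t)"
  proof -
    have zp: "z - p t \<in> E" using zE pE unfolding E_def by (simp add: span_diff)
    have "f (p t) = f z - f (z - p t)" by (simp add: linear_diff[OF f(1)])
    moreover have "f (z - p t) \<le> norm (z - p t)" using fb[OF zp] by simp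
    moreover have "norm (p t) \<le> norm z + norm (z - p t)" using norm_triangle_ineq4[of z "z - p t"] by simp
    ultimately show ?thesis using f(2) dz' by linarith
  qed
  have phiM: "norm (p u) \<le> M" if "u \<in> {0..1}" for u
  proof -
    have "norm (p u) \<le> norm a + norm (u *\<^sub>R y)" unfolding p_def by (rule norm_triangle_ineq)
    also have "norm (u *\<^sub>R y) \<le> norm y" using that by (simp add: mult_left_le_one_le)
    finally show ?thesis using M by (simp add: y_def)
  qed
  have e1: "\<bar>norm (T (p t)) - norm (T z)\<bar> \<le> K * de"
  proof -
    have "\<bar>norm (T (p t)) - norm (T z)\<bar> \<le> norm (T (p t) - T z)" by (rule norm_triangle_ineq3)
    also have "T (p t) - T z = T (p t - z)" by (simp add: T.diff)
    also have "norm (T (p t - z)) \<le> norm (p t - z) * K" using K(2) by blast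
    also have "\<dots> \<le> de * K" using dz' K by (simp add: norm_minus_commute mult_right_mono)
    finally show ?thesis by (simp add: mult.commute)
  qed
  have e2: "\<bar>norm z - norm (p t)\<bar> \<le> de"
    using norm_triangle_ineq3[of z "p t"] dz' by simp
  have bNz: "0 \<le> norm (T z)" "norm (T z) \<le> K * (M + 1)"
  proof -
    show "0 \<le> norm (T z)" by simp
    have "norm z \<le> M + 1" using e2 phiM[OF t] de1 by linarith
    then have "norm z * K \<le> (M + 1) * K" using K by (simp add: mult_right_mono)
    then show "norm (T z) \<le> K * (M + 1)" using K(2)[rule_format, of z] by (simp add: mult.commute)
  qed
  have main: "\<bar>s\<bar> \<le> norm (b - a) \<and> (norm (p t) + (u - t) * s - ep \<le> norm (p u) \<and>
      norm (T (p t)) * (norm (p t) + (u - t) * s) - ep \<le> norm (p t) * norm (T (p u)))"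
    if u: "u \<in> {0..1}" for u
  proof (intro conjI)
    show "\<bar>s\<bar> \<le> norm (b - a)" using sL by (simp add: L_def y_def)
    have dep: "2 * de \<le> ep"
    proof -
      have "ep / (2 + K*(5*M+2)) \<le> ep / 2"
        using ep K M0 den by (intro divide_left_mono) (auto intro: mult_nonneg_nonneg)
      then show ?thesis using de1 by linarith
    qed
    have "f (p u) \<le> norm (p u)" using fb[OF pE[of u]] by simp
    then show "norm (p t) + (u - t) * s - ep \<le> norm (p u)" using fp[of u] fpt_lo dep by linarith
    define q where "q = norm (p t) + (u - t) * s"
    define F where "F = f (p u)"
    define Nz where "Nz = norm (T z)"
    have Fq: "q - 2*de \<le> F" "F \<le> q" using fp[of u] fpt_lo fpt_up by (auto simp: q_def F_def)
    have ut: "\<bar>u - t\<bar> \<le> 1" using u t by auto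
    have "\<bar>(u - t) * s\<bar> \<le> 1 * L" unfolding abs_mult using ut sL by (intro mult_mono) auto
    hence "(u - t) * s \<le> L" "- ((u - t) * s) \<le> L" by (simp_all add: abs_le_iff)
    hence bq: "\<bar>q\<bar> \<le> 2 * M" using phiM[OF t] LM norm_ge_zero[of "p t"] unfolding q_def abs_le_iff by linarith
    have key: "F * Nz \<le> norm z * norm (T (p u))"
      unfolding F_def Nz_def using Klem[OF T bspec[OF pres zU] z0 f(1) f(2) f(3)] pE[of u]
      unfolding E_def by blast
    have bpsi: "0 \<le> norm (T (p u))" "norm (T (p u)) \<le> K * M"
    proof -
      show "0 \<le> norm (T (p u))" by simp
      have "norm (p u) * K \<le> M * K" using phiM[OF u] K by (simp add: mult_right_mono)
      then show "norm (T (p u)) \<le> K * M" using K(2)[rule_format, of "p u"] by (simp add: mult.commute)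
    qed
    have t1: "(norm (T (p t)) - Nz) * q \<le> K*de * (2*M)"
    proof -
      have "(norm (T (p t)) - Nz) * q \<le> \<bar>(norm (T (p t)) - Nz) * q\<bar>" by simp
      also have "\<dots> = \<bar>norm (T (p t)) - Nz\<bar> * \<bar>q\<bar>" by (simp add: abs_mult)
      also have "\<dots> \<le> K*de * (2*M)" using e1 bq by (intro mult_mono) (auto simp: Nz_def)
      finally show ?thesis .
    qed
    have t2: "Nz * (q - F) \<le> K * (M + 1) * (2*de)"
      using bNz Fq K M0 by (intro mult_mono) (auto simp: Nz_def)
    have t3: "(norm z - norm (p t)) * norm (T (p u)) \<le> de * (K * M)"
      using e2 bpsi by (intro mult_mono) auto
    have sum: "norm (T (p t)) * q - norm (p t) * norm (T (p u))
        = (norm (T (p t)) - Nz) * q + Nz * (q - F) + (F * Nz - norm z * norm (T (p u)))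
          + (norm z - norm (p t)) * norm (T (p u))"
      by (simp add: algebra_simps)
    have "norm (T (p t)) * q - norm (p t) * norm (T (p u)) \<le> K*de*(2*M) + K*(M+1)*(2*de) + de*(K*M)"
      using sum t1 t2 t3 key by linarith
    also have "\<dots> = de * (K*(5*M+2))" by (simp add: algebra_simps)
    also have "\<dots> \<le> ep"
    proof -
      have "de * (K*(5*M+2)) \<le> ep / (2 + K*(5*M+2)) * (K*(5*M+2))"
        using de1 K M0 by (intro mult_right_mono) auto
      also have "\<dots> \<le> ep"
        using den ep K M0 by (simp add: field_simps)
      finally show ?thesis .
    qed
    finally show "norm (T (p t)) * (norm (p t) + (u - t) * s) - ep \<le> norm (p t) * norm (T (p u))"
      unfolding q_def by linarith
  qed
  show ?thesis using main sL unfolding p_def y_def L_def by (intro exI[of _ s]) auto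
qed

lemma ratio_le:
  fixes T :: "'a::real_normed_vector \<Rightarrow> 'a"
  assumes T: "bounded_linear T" and dense: "closure U = UNIV" and pres: "\<forall>x\<in>U. preserves_bj_at T x"
    and a: "a \<noteq> 0" and b: "b \<noteq> 0"
  shows "norm (T a) / norm a \<le> norm (T b) / norm b"
proof -
  interpret T: bounded_linear T by fact
  show ?thesis
  proof (cases "\<exists>t\<in>{0..1}. a + t *\<^sub>R (b - a) = 0")
    case True
    then obtain t where t: "t \<in> {0..1}" "a + t *\<^sub>R (b - a) = 0" by blast
    have eq: "(1 - t) *\<^sub>R a + t *\<^sub>R b = 0" using t(2) by (simp add: algebra_simps)
    have t0: "t \<noteq> 0" using eq a by auto
    have t1: "t \<noteq> 1" using eq b by auto
    define c where "c = (1 - t) / t"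
    have c0: "c > 0" using t t0 t1 by (auto simp: c_def)
    have tb: "t *\<^sub>R b = - ((1 - t) *\<^sub>R a)" using eq by (simp add: add_eq_0_iff)
    have "b = (1/t) *\<^sub>R (t *\<^sub>R b)" using t0 by simp
    also have "\<dots> = - (c *\<^sub>R a)" unfolding tb c_def by (simp add: divide_inverse_commute)
    finally have bc: "b = - (c *\<^sub>R a)" .
    from bc have "norm (T b) / norm b = (c * norm (T a)) / (c * norm a)"
      using c0 by (simp add: T.neg T.scaleR)
    also have "\<dots> = norm (T a) / norm a" using c0 by simp
    finally show ?thesis by simp
  next
    case False
    define phi where "phi = (\<lambda>t::real. norm (a + t *\<^sub>R (b - a)))"
    define psi where "psi = (\<lambda>t::real. norm (T (a + t *\<^sub>R (b - a))))"
    have cont: "continuous_on {0..1} phi" unfolding phi_def by (intro continuous_intros)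
    obtain t0 where t0: "t0 \<in> {0..1}" "\<forall>t\<in>{0..1}. phi t0 \<le> phi t"
      using continuous_attains_inf[OF compact_Icc _ cont] by fastforce
    define m where "m = phi t0"
    have m0: "m > 0" using False t0(1) by (auto simp: m_def phi_def)
    obtain K where K: "K > 0" "\<forall>x. norm (T x) \<le> norm x * K" using T.pos_bounded by blast
    have H: "\<forall>t\<in>{0..1}. \<forall>e>0. \<exists>s. \<bar>s\<bar> \<le> norm (b - a) \<and> (\<forall>u\<in>{0..1}.
              phi t + (u - t) * s - e \<le> phi u \<and> psi t * (phi t + (u - t) * s) - e \<le> phi t * psi u)"
      using Hvec[OF T dense pres K m0 _ refl] t0(2) unfolding phi_def psi_def m_def by blast
    have "psi 0 / phi 0 \<le> psi 1 / phi 1"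
    proof (rule chain1d[OF m0 _ _ _ H])
      show "\<forall>t\<in>{0..1}. m \<le> phi t" using t0 by (simp add: m_def)
      show "\<forall>t\<in>{0..1}. 0 \<le> psi t \<and> psi t \<le> K * phi t"
        using K(2) by (simp add: psi_def phi_def mult.commute)
    qed simp
    then show ?thesis by (simp add: phi_def psi_def)
  qed
qed

theorem mainTheorem7:
  fixes T :: "'a::banach \<Rightarrow> 'a" and U :: "'a set"
  assumes "gdelta_in euclidean (smooth_points :: 'a set)"
    and "closure (smooth_points :: 'a set) = UNIV"
    and "closure U = UNIV"
    and "bounded_linear T"
    and "\<forall>x\<in>U. preserves_bj_at T x"
  shows "\<exists>c::real. c \<ge> 0 \<and> (\<forall>x. norm (T x) = c * norm x)"
proof -
  interpret T: bounded_linear T by fact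
  show ?thesis
  proof (cases "\<exists>a::'a. a \<noteq> 0")
    case True
    then obtain a :: 'a where a: "a \<noteq> 0" by blast
    define c where "c = norm (T a) / norm a"
    have "norm (T x) = c * norm x" for x
    proof (cases "x = 0")
      case True then show ?thesis by (simp add: T.zero)
    next
      case False
      have "norm (T x) / norm x = c"
        using ratio_le[OF assms(4,3,5) a False] ratio_le[OF assms(4,3,5) False a]
        unfolding c_def by linarith
      then show ?thesis using False by (simp add: field_simps)
    qed
    moreover have "c \<ge> 0" by (simp add: c_def)
    ultimately show ?thesis by blast
  next
    case False
    then have "\<forall>x::'a. x = 0" by blast
    then show ?thesis by (intro exI[of _ 0]) (metis T.zero norm_zero mult_zero_left order_refl)
  qed
qed

end
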